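(* For every finite field $\mathbb{F}_q$, the unit-graph on $\operatorname{Mat}_2(\mathbb{F}_q)$ is a strongly regular graph with parameters $(q^4,\; q^4-q^3-q^2+q,\; q^4-2q^3-q^2+3q,\; q^4-2q^3+q)$.
   Context: The unit-graph on $\operatorname{Mat}_2(\mathbb{F}_q)$ is the graph with vertex set $\operatorname{Mat}_2(\mathbb{F}_q)$ in which $A$ and $B$ are adjacent iff $B - A \in \operatorname{GL}_2(\mathbb{F}_q)$. A non-empty, non-complete regular graph is strongly regular with parameters $(n,k,a,c)$ if it has $n$ vertices, is $k$-regular, every pair of distinct adjacent vertices has exactly $a$ common neighbours, and every pair of distinct nonadjacent vertices has exactly $c$ common neighbours. *)

theory Defs
  imports "HOL-Analysis.Analysis"
begin

text \<open>Parameters are integers so that the polynomial expressions in the statement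
  are evaluated without truncated subtraction.\<close>

definition strongly_regular :: "'v set \<Rightarrow> ('v \<Rightarrow> 'v \<Rightarrow> bool) \<Rightarrow> int \<Rightarrow> int \<Rightarrow> int \<Rightarrow> int \<Rightarrow> bool" where
  "strongly_regular V E n k a c \<longleftrightarrow>
     finite V \<and>
     (\<forall>x\<in>V. \<not> E x x) \<and>
     (\<forall>x\<in>V. \<forall>y\<in>V. E x y \<longleftrightarrow> E y x) \<and>
     (\<exists>x\<in>V. \<exists>y\<in>V. E x y) \<and>
     (\<exists>x\<in>V. \<exists>y\<in>V. x \<noteq> y \<and> \<not> E x y) \<and>
     int (card V) = n \<and>
     (\<forall>x\<in>V. int (card {z\<in>V. E x z}) = k) \<and>
     (\<forall>x\<in>V. \<forall>y\<in>V. x \<noteq> y \<and> E x y \<longrightarrow> int (card {z\<in>V. E x z \<and> E y z}) = a) \<and>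
     (\<forall>x\<in>V. \<forall>y\<in>V. x \<noteq> y \<and> \<not> E x y \<longrightarrow> int (card {z\<in>V. E x z \<and> E y z}) = c)"

definition unit_graph_adj :: "'a::field ^2^2 \<Rightarrow> 'a ^2^2 \<Rightarrow> bool" where
  "unit_graph_adj A B \<longleftrightarrow> invertible (B - A)"

end

theory Submission imports Defs begin

definition mk :: "'a \<Rightarrow> 'a \<Rightarrow> 'a \<Rightarrow> 'a \<Rightarrow> 'a::zero^2^2" where
 "mk a b c d = vector [vector [a,b], vector [c,d]]"

lemma mk_nth [simp]: "mk a b c d $1$1 = a" "mk a b c d $1$2 = b" "mk a b c d $2$1 = c" "mk a b c d $2$2 = d"
  by (simp_all add: mk_def)

lemma mk_eta: "mk (A$1$1) (A$1$2) (A$2$1) (A$2$2) = A"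
  by (simp add: vec_eq_iff forall_2)

lemma mk_eq_iff: "mk a b c d = mk a' b' c' d' \<longleftrightarrow> a = a' \<and> b = b' \<and> c = c' \<and> d = d'"
  by (metis mk_nth)

lemma mk_mult: "mk a b c d ** mk e f g h = mk (a*e+b*g) (a*f+b*h) (c*e+d*g) (c*f+d*h :: 'a::semiring_1)"
  by (simp add: vec_eq_iff forall_2 matrix_matrix_mult_def sum_2)

lemma mk_diff: "mk a b c d - mk e f g h = mk (a-e) (b-f) (c-g) (d-h :: 'a::ab_group_add)"
  by (simp add: vec_eq_iff forall_2)

lemma mk_add: "mk a b c d + mk e f g h = mk (a+e) (b+f) (c+g) (d+h :: 'a::ab_group_add)"
  by (simp add: vec_eq_iff forall_2)

lemma det_mk: "det (mk a b c d) = a*d - b*(c::'a::comm_ring_1)"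
  by (simp add: det_2)

lemma mat1_mk: "(mat 1 :: 'a::{zero,one}^2^2) = mk 1 0 0 1"
  by (simp add: vec_eq_iff forall_2 mat_def)

lemma zero_mk: "(0 :: 'a::zero^2^2) = mk 0 0 0 0"
  by (simp add: vec_eq_iff forall_2)

lemma card_mat: "card {U::'a::zero^2^2. P (U$1$1) (U$1$2) (U$2$1) (U$2$2)} = card {(a,d,b,c). P a b c d}"
proof (rule bij_betw_same_card)
  show "bij_betw (\<lambda>U. (U$1$1, U$2$2, U$1$2, U$2$1)) {U::'a::zero^2^2. P (U$1$1) (U$1$2) (U$2$1) (U$2$2)} {(a,d,b,c). P a b c d}"
    apply (rule bij_betw_byWitness[where f' = "\<lambda>(a,d,b,c). mk a b c d"])
    by (auto simp: mk_eta)
qed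

lemma card_split: "card (Collect (case_prod P)) = (\<Sum>x\<in>(UNIV::'a::finite set). card {y::'b::finite. P x y})"
proof -
  have "Collect (case_prod P) = Sigma UNIV (\<lambda>x. {y. P x y})" by auto
  then show ?thesis by simp
qed

lemma card_prod_eq:
  fixes t :: "'a::{field,finite}"
  shows "int (card {(b,c). b*c = t}) = (if t = 0 then 2 * int CARD('a) - 1 else int CARD('a) - 1)"
proof (cases "t = 0")
  case True
  have "{(b,c). b*c = t} = ({0::'a} \<times> (UNIV::'a set)) \<union> ((UNIV::'a set) \<times> {0::'a})" using True by auto
  moreover have "card (({0::'a} \<times> (UNIV::'a set)) \<union> ((UNIV::'a set) \<times> {0::'a})) = CARD('a) + CARD('a) - 1"
  proof -
    define A where "A = ({0::'a} \<times> (UNIV::'a set))"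
    define B where "B = ((UNIV::'a set) \<times> {0::'a})"
    have i: "A \<inter> B = {(0,0)}" unfolding A_def B_def by auto
    have u: "card A + card B = card (A \<union> B) + card (A \<inter> B)"
      by (rule card_Un_Int) auto
    have "card A = CARD('a)" "card B = CARD('a)" unfolding A_def B_def by (simp_all add: card_cartesian_product)
    then have "card (A \<union> B) + 1 = CARD('a) + CARD('a)" using u i by simp
    then show ?thesis unfolding A_def B_def by simp
  qed
  moreover obtain n where "CARD('a) = Suc n" using gr0_implies_Suc[OF finite_UNIV_card_ge_0[where ?'a='a]] by auto
  ultimately show ?thesis using True by simp
next
  case False
  have "{(b,c). b*c = t} = (\<lambda>b. (b, t/b)) ` (UNIV - {0})" using False
    by (auto simp: field_simps image_iff)
  moreover have "inj_on (\<lambda>b. (b, t/b)) (UNIV - {0::'a})" by (auto simp: inj_on_def)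
  ultimately have "card {(b,c). b*c = t} = CARD('a) - 1" by (simp add: card_image)
  moreover obtain n where "CARD('a) = Suc n" using gr0_implies_Suc[OF finite_UNIV_card_ge_0[where ?'a='a]] by auto
  ultimately show ?thesis using False by simp
qed

lemma sum_if_eq:
  fixes X Y :: int and c :: "'a::finite"
  shows "(\<Sum>x\<in>UNIV. if x = c then X else Y) = int CARD('a) * Y + (X - Y)"
proof -
  have "(\<Sum>x\<in>UNIV. if x = c then X else Y) = (\<Sum>x\<in>UNIV. Y + (if x = c then X - Y else 0))"
    by (rule sum.cong) auto
  also have "\<dots> = int CARD('a) * Y + (X - Y)" by (simp add: sum.distrib)
  finally show ?thesis .
qed

lemma card_tuple:
  "card {(a::'a::finite,d::'a,b::'a,c::'a). P a d b c} = (\<Sum>a\<in>(UNIV::'a set). \<Sum>d\<in>(UNIV::'a set). card {(b,c). P a d b c})"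
  by (simp add: card_split)

lemma count_sing:
  shows "int (card {U::'a::{field,finite}^2^2. det U = 0}) = int CARD('a)^3 + int CARD('a)^2 - int CARD('a)"
proof -
  let ?q = "int CARD('a)"
  have "card {U::'a^2^2. det U = 0} = card {U::'a^2^2. (\<lambda>a b c d. a*d - b*c = 0) (U$1$1) (U$1$2) (U$2$1) (U$2$2)}"
    by (simp add: det_2)
  also have "\<dots> = card {(a,d,b,c). a*d - b*c = (0::'a)}" by (rule card_mat)
  also have "\<dots> = (\<Sum>a\<in>(UNIV::'a set). \<Sum>d\<in>(UNIV::'a set). card {(b,c). b*c = a*(d::'a)})"
    unfolding card_tuple by (intro sum.cong refl arg_cong[where f=card]) (auto simp: algebra_simps)
  finally have "int (card {U::'a^2^2. det U = 0}) = (\<Sum>a\<in>(UNIV::'a set). \<Sum>d\<in>(UNIV::'a set). int (card {(b,c). b*c = a*(d::'a)}))"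
    by simp
  also have "\<dots> = (\<Sum>a\<in>(UNIV::'a set). \<Sum>d\<in>(UNIV::'a set). if a*(d::'a) = 0 then 2*?q - 1 else ?q - 1)"
    by (simp only: card_prod_eq)
  also have "\<dots> = (\<Sum>a\<in>(UNIV::'a set). if a = 0 then ?q * (2*?q - 1) else ?q*?q)"
  proof (rule sum.cong)
    fix a :: 'a
    show "(\<Sum>d\<in>UNIV. if a*d = 0 then 2*?q - 1 else ?q - 1) = (if a = 0 then ?q * (2*?q - 1) else ?q*?q)"
    proof (cases "a = 0")
      case True then show ?thesis by simp
    next
      case False
      then have "(\<Sum>d\<in>UNIV. if a*d = 0 then 2*?q - 1 else ?q - 1) = (\<Sum>d\<in>UNIV. if (d::'a) = 0 then 2*?q - 1 else ?q - 1)"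
        by simp
      also have "\<dots> = ?q*?q" unfolding sum_if_eq by (simp add: algebra_simps)
      finally show ?thesis using False by simp
    qed
  qed simp
  also have "\<dots> = ?q^3 + ?q^2 - ?q" unfolding sum_if_eq by (simp add: algebra_simps power3_eq_cube power2_eq_square)
  finally show ?thesis .
qed

lemma count_I:
  shows "int (card {U::'a::{field,finite}^2^2. det U = 0 \<and> det (U - mat 1) = 0}) = int CARD('a)^2 + int CARD('a)"
proof -
  let ?q = "int CARD('a)"
  have "card {U::'a^2^2. det U = 0 \<and> det (U - mat 1) = 0} = card {U::'a^2^2. (\<lambda>a b c d. a*d - b*c = 0 \<and> (a-1)*(d-1) - b*c = 0) (U$1$1) (U$1$2) (U$2$1) (U$2$2)}"
    by (simp add: det_2 mat1_mk)
  also have "\<dots> = card {(a,d,b,c). a*d - b*c = (0::'a) \<and> (a-1)*(d-1) - b*c = 0}" by (rule card_mat)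
  also have "\<dots> = (\<Sum>a\<in>(UNIV::'a set). \<Sum>d\<in>(UNIV::'a set). if d = 1 - a then card {(b,c). b*c = a*(1-a)} else 0)"
  proof -
    have eq: "{(b,c). a*d - b*c = 0 \<and> (a-1)*(d-1) - b*c = 0} = (if d = 1 - a then {(b,c). b*c = a*(1-a)} else ({}::('a\<times>'a) set))" for a d :: 'a
    proof (cases "d = 1 - a")
      case True
      have "(a-1)*(1-a-1) = a*(1-a)" by (simp add: algebra_simps)
      then show ?thesis unfolding True by (auto simp: algebra_simps)
    next
      case False
      have "\<not> (a*d - b*c = 0 \<and> (a-1)*(d-1) - b*c = 0)" for b c
      proof
        assume h: "a*d - b*c = 0 \<and> (a-1)*(d-1) - b*c = 0"
        then have "a*d - b*c - ((a-1)*(d-1) - b*c) = 0" by simp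
        then have "a + d - 1 = 0" by (simp add: algebra_simps)
        then show False using False by (simp add: algebra_simps eq_diff_eq)
      qed
      then show ?thesis using False by auto
    qed
    show ?thesis unfolding card_tuple eq by (intro sum.cong refl) simp
  qed
  finally have "int (card {U::'a^2^2. det U = 0 \<and> det (U - mat 1) = 0}) = (\<Sum>a\<in>(UNIV::'a set). \<Sum>d\<in>(UNIV::'a set). if d = 1 - a then int (card {(b,c). b*c = a*(1-a)}) else 0)"
    by (simp add: if_distrib)
  also have "\<dots> = (\<Sum>a\<in>UNIV. int (card {(b,c). b*c = a*(1-(a::'a))}))"
    by (simp add: sum.delta)
  also have "\<dots> = (\<Sum>a\<in>UNIV. if a*(1-(a::'a)) = 0 then 2*?q - 1 else ?q - 1)"
    by (simp only: card_prod_eq)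
  also have "\<dots> = (\<Sum>a\<in>UNIV. (?q - 1) + (if a = (0::'a) then ?q else 0) + (if a = 1 then ?q else 0))"
  proof (rule sum.cong)
    fix a :: 'a
    have "a*(1-a) = 0 \<longleftrightarrow> a = 0 \<or> a = 1" by auto
    then show "(if a*(1-a) = 0 then 2*?q - 1 else ?q - 1) = (?q - 1) + (if a = (0::'a) then ?q else 0) + (if a = 1 then ?q else 0)"
      by auto
  qed simp
  also have "\<dots> = ?q^2 + ?q" unfolding sum.distrib by (simp add: power2_eq_square algebra_simps)
  finally show ?thesis .
qed

lemma count_E:
  shows "int (card {U::'a::{field,finite}^2^2. det U = 0 \<and> det (U - mk 1 0 0 0) = 0}) = 2 * int CARD('a)^2 - int CARD('a)"
proof -
  let ?q = "int CARD('a)"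
  have "card {U::'a^2^2. det U = 0 \<and> det (U - mk 1 0 0 0) = 0} = card {U::'a^2^2. (\<lambda>a b c d. a*d - b*c = 0 \<and> (a-1)*d - b*c = 0) (U$1$1) (U$1$2) (U$2$1) (U$2$2)}"
    by (simp add: det_2)
  also have "\<dots> = card {(a,d,b,c). a*d - b*c = (0::'a) \<and> (a-1)*d - b*c = 0}" by (rule card_mat)
  also have "\<dots> = (\<Sum>a\<in>(UNIV::'a set). \<Sum>d\<in>(UNIV::'a set). if d = 0 then card {(b,c). b*c = (0::'a)} else 0)"
  proof -
    have eq: "{(b,c). a*d - b*c = 0 \<and> (a-1)*d - b*c = 0} = (if d = 0 then {(b,c). b*c = (0::'a)} else ({}::('a\<times>'a) set))" for a d :: 'a
    proof (cases "d = 0")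
      case True then show ?thesis by (auto simp: algebra_simps)
    next
      case False
      have "\<not> (a*d - b*c = 0 \<and> (a-1)*d - b*c = 0)" for b c
      proof
        assume h: "a*d - b*c = 0 \<and> (a-1)*d - b*c = 0"
        then have "a*d - b*c - ((a-1)*d - b*c) = 0" by simp
        then have "d = 0" by (simp add: algebra_simps)
        then show False using False by simp
      qed
      then show ?thesis using False by auto
    qed
    show ?thesis unfolding card_tuple eq by (intro sum.cong refl) simp
  qed
  finally have "int (card {U::'a^2^2. det U = 0 \<and> det (U - mk 1 0 0 0) = 0}) = (\<Sum>a\<in>(UNIV::'a set). \<Sum>d\<in>(UNIV::'a set). if d = (0::'a) then int (card {(b,c). b*c = (0::'a)}) else 0)"
    by (simp add: if_distrib)
  also have "\<dots> = (\<Sum>a\<in>(UNIV::'a set). 2*?q - 1)"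
    using card_prod_eq[of "0::'a"] by simp
  also have "\<dots> = 2*?q^2 - ?q" by (simp add: power2_eq_square algebra_simps)
  finally show ?thesis .
qed

definition NN :: "'a::{field,finite}^2^2 \<Rightarrow> nat" where
  "NN D = card {U::'a^2^2. det U \<noteq> 0 \<and> det (U - D) \<noteq> 0}"

lemma NN_formula:
  fixes D :: "'a::{field,finite}^2^2"
  shows "int (NN D) = int CARD('a)^4 - 2 * (int CARD('a)^3 + int CARD('a)^2 - int CARD('a)) + int (card {U. det U = 0 \<and> det (U - D) = 0})"
proof -
  define Z0 where "Z0 = {U::'a^2^2. det U = 0}"
  define ZD where "ZD = {U::'a^2^2. det (U - D) = 0}"
  have "ZD = (\<lambda>U. U + D) ` Z0" unfolding Z0_def ZD_def
    by (auto simp: image_iff intro!: exI[where x="_ - D"])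
  moreover have "inj_on (\<lambda>U. U + D) Z0" by (auto simp: inj_on_def)
  ultimately have cz: "card ZD = card Z0" by (simp add: card_image)
  have u: "card Z0 + card ZD = card (Z0 \<union> ZD) + card (Z0 \<inter> ZD)" by (rule card_Un_Int) auto
  have "{U::'a^2^2. det U \<noteq> 0 \<and> det (U - D) \<noteq> 0} = UNIV - (Z0 \<union> ZD)" unfolding Z0_def ZD_def by auto
  then have "NN D = CARD('a^2^2) - card (Z0 \<union> ZD)" unfolding NN_def by (simp add: card_Diff_subset)
  moreover have "card (Z0 \<union> ZD) \<le> CARD('a^2^2)" by (rule card_mono) auto
  ultimately have "int (NN D) = int (CARD('a^2^2)) - int (card (Z0 \<union> ZD))" by simp
  moreover have "int (CARD('a^2^2)) = int CARD('a)^4" by simp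
  moreover have "int (card Z0) = int CARD('a)^3 + int CARD('a)^2 - int CARD('a)" unfolding Z0_def by (rule count_sing)
  moreover have "Z0 \<inter> ZD = {U. det U = 0 \<and> det (U - D) = 0}" unfolding Z0_def ZD_def by auto
  ultimately show ?thesis using u cz by (simp add: algebra_simps)
qed

lemma diff_mult_distrib3:
  fixes P V D Q :: "'a::comm_ring_1^'n^'n"
  shows "P ** (V - D) ** Q = P ** V ** Q - P ** D ** Q"
  by (simp add: matrix_matrix_mult_def vec_eq_iff algebra_simps sum_subtractf)

lemma NN_transform:
  fixes P Q D :: "'a::{field,finite}^2^2"
  assumes "det P \<noteq> 0" "det Q \<noteq> 0"
  shows "NN (P ** D ** Q) = NN D"
proof -
  obtain Pv where Pv: "Pv ** P = mat 1" "P ** Pv = mat 1"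
    using assms(1) unfolding invertible_det_nz[symmetric] invertible_def by blast
  obtain Qv where Qv: "Qv ** Q = mat 1" "Q ** Qv = mat 1"
    using assms(2) unfolding invertible_det_nz[symmetric] invertible_def by blast
  have dt: "det (P ** V ** Q) \<noteq> 0 \<longleftrightarrow> det V \<noteq> 0" for V :: "'a^2^2"
    using assms by (simp add: det_mul)
  have bkw: "Pv ** (P ** V ** Q) ** Qv = V" for V :: "'a^2^2"
    by (metis Pv(1) Qv(2) matrix_mul_assoc matrix_mul_lid matrix_mul_rid)
  have fwd: "P ** (Pv ** U ** Qv) ** Q = U" for U :: "'a^2^2"
    by (metis Pv(2) Qv(1) matrix_mul_assoc matrix_mul_lid matrix_mul_rid)
  have "{U::'a^2^2. det U \<noteq> 0 \<and> det (U - P ** D ** Q) \<noteq> 0} = (\<lambda>V. P ** V ** Q) ` {V. det V \<noteq> 0 \<and> det (V - D) \<noteq> 0}"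
  proof (rule set_eqI, rule iffI)
    fix U assume "U \<in> {U::'a^2^2. det U \<noteq> 0 \<and> det (U - P ** D ** Q) \<noteq> 0}"
    then have h: "det U \<noteq> 0" "det (U - P ** D ** Q) \<noteq> 0" by auto
    let ?V = "Pv ** U ** Qv"
    have "det ?V \<noteq> 0" using h(1) dt[of ?V] fwd[of U] by simp
    moreover have "det (?V - D) \<noteq> 0" using h(2) dt[of "?V - D"] fwd[of U] by (simp add: diff_mult_distrib3)
    ultimately show "U \<in> (\<lambda>V. P ** V ** Q) ` {V. det V \<noteq> 0 \<and> det (V - D) \<noteq> 0}"
      using fwd[of U] by (auto simp: image_iff intro!: bexI[where x="?V"])
  next
    fix U assume "U \<in> (\<lambda>V. P ** V ** Q) ` {V. det V \<noteq> 0 \<and> det (V - D) \<noteq> 0}"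
    then obtain V where "U = P ** V ** Q" "det V \<noteq> 0" "det (V - D) \<noteq> 0" by auto
    then show "U \<in> {U::'a^2^2. det U \<noteq> 0 \<and> det (U - P ** D ** Q) \<noteq> 0}"
      using dt[of V] dt[of "V - D"] by (simp add: diff_mult_distrib3)
  qed
  moreover have "inj_on (\<lambda>V. P ** V ** Q) S" for S
    by (rule inj_onI) (metis bkw)
  ultimately show ?thesis unfolding NN_def by (simp add: card_image)
qed

lemma NN_inv:
  fixes D :: "'a::{field,finite}^2^2"
  assumes "det D \<noteq> 0"
  shows "NN D = NN (mat 1 :: 'a^2^2)"
proof -
  obtain Di where Di: "Di ** D = mat 1" "D ** Di = mat 1"
    using assms unfolding invertible_det_nz[symmetric] invertible_def by blast
  have "det Di \<noteq> 0" using Di(1) by (metis det_I det_mul mult_zero_left zero_neq_one)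
  then have "NN (Di ** D ** mat 1) = NN D" by (intro NN_transform) auto
  moreover have "Di ** D ** mat 1 = mat 1" using Di by simp
  ultimately show ?thesis by metis
qed

lemma NN_rank1_a:
  fixes a b c d :: "'a::{field,finite}"
  assumes "a \<noteq> 0" "a*d = b*c"
  shows "NN (mk a b c d) = NN (mk 1 0 0 0 :: 'a^2^2)"
proof -
  let ?P = "mk (1/a) 0 (-c/a) (1::'a)" and ?Q = "mk 1 (-b/a) 0 (1::'a)"
  have "det ?P \<noteq> 0" "det ?Q \<noteq> 0" using assms by (simp_all add: det_mk)
  then have "NN (?P ** mk a b c d ** ?Q) = NN (mk a b c d)" by (rule NN_transform)
  moreover have "?P ** mk a b c d ** ?Q = mk 1 0 0 0"
    using assms unfolding mk_mult mk_eq_iff by (simp add: field_simps)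
  ultimately show ?thesis by metis
qed

lemma NN_swap:
  fixes a b c d :: "'a::{field,finite}"
  shows "NN (mk a b c d) = NN (mk b a d c)" "NN (mk a b c d) = NN (mk c d a b)"
proof -
  let ?S = "mk 0 1 1 (0::'a)"
  have s: "det ?S \<noteq> 0" by (simp add: det_mk)
  have "NN (mat 1 ** mk a b c d ** ?S) = NN (mk a b c d)" using s by (intro NN_transform) (auto simp: det_mk mat1_mk)
  then show "NN (mk a b c d) = NN (mk b a d c)" by (simp add: mat1_mk mk_mult)
  have "NN (?S ** mk a b c d ** mat 1) = NN (mk a b c d)" using s by (intro NN_transform) (auto simp: det_mk mat1_mk)
  then show "NN (mk a b c d) = NN (mk c d a b)" by (simp add: mat1_mk mk_mult)
qed

lemma NN_rank1:
  fixes D :: "'a::{field,finite}^2^2"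
  assumes "det D = 0" "D \<noteq> 0"
  shows "NN D = NN (mk 1 0 0 0 :: 'a^2^2)"
proof -
  obtain a b c d where D: "D = mk a b c d" by (metis mk_eta)
  have e: "a*d = b*c" using assms(1) by (simp add: D det_mk)
  have nz: "a \<noteq> 0 \<or> b \<noteq> 0 \<or> c \<noteq> 0 \<or> d \<noteq> 0" using assms(2) by (auto simp: D zero_mk)
  show ?thesis
  proof (cases "a \<noteq> 0")
    case True then show ?thesis using e NN_rank1_a D by simp
  next
    case a0: False
    show ?thesis
    proof (cases "b \<noteq> 0")
      case True
      have "NN (mk b a d c) = NN (mk 1 0 0 0 :: 'a^2^2)" using True e by (intro NN_rank1_a) (auto simp: mult.commute)
      then show ?thesis using NN_swap(1)[of a b c d] D by simp
    next
      case b0: False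
      show ?thesis
      proof (cases "c \<noteq> 0")
        case True
        have "NN (mk c d a b) = NN (mk 1 0 0 0 :: 'a^2^2)" using True e by (intro NN_rank1_a) (auto simp: mult.commute)
        then show ?thesis using NN_swap(2)[of a b c d] D by simp
      next
        case False
        then have "d \<noteq> 0" using nz a0 b0 by auto
        have "NN (mk d c b a) = NN (mk 1 0 0 0 :: 'a^2^2)" using \<open>d \<noteq> 0\<close> e by (intro NN_rank1_a) (auto simp: mult.commute)
        then show ?thesis using NN_swap(1)[of a b c d] NN_swap(2)[of b a d c] D by simp
      qed
    qed
  qed
qed

lemma det_swap2: "det (x - y) = det (y - (x::'a::comm_ring_1^2^2))"
  by (simp add: det_2 algebra_simps)

lemma common_nb:
  fixes x y :: "'a::{field,finite}^2^2"
  shows "card {z. unit_graph_adj x z \<and> unit_graph_adj y z} = NN (y - x)"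
proof -
  have "{z. unit_graph_adj x z \<and> unit_graph_adj y z} = (\<lambda>U. U + x) ` {U. det U \<noteq> 0 \<and> det (U - (y - x)) \<noteq> 0}"
  proof (rule set_eqI, rule iffI)
    fix z assume "z \<in> {z. unit_graph_adj x z \<and> unit_graph_adj y z}"
    then have "det (z - x) \<noteq> 0" "det (z - x - (y - x)) \<noteq> 0"
      by (auto simp: unit_graph_adj_def invertible_det_nz)
    then show "z \<in> (\<lambda>U. U + x) ` {U. det U \<noteq> 0 \<and> det (U - (y - x)) \<noteq> 0}"
      by (auto simp: image_iff intro!: bexI[where x="z - x"])
  next
    fix z assume "z \<in> (\<lambda>U. U + x) ` {U. det U \<noteq> 0 \<and> det (U - (y - x)) \<noteq> 0}"
    then obtain U where "z = U + x" "det U \<noteq> 0" "det (U - (y - x)) \<noteq> 0" by auto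
    moreover have e: "U + x - y = U - (y - x)" by (simp add: algebra_simps)
    ultimately show "z \<in> {z. unit_graph_adj x z \<and> unit_graph_adj y z}"
      by (simp add: unit_graph_adj_def invertible_det_nz e)
  qed
  moreover have "inj_on (\<lambda>U. U + x) S" for S by (auto simp: inj_on_def)
  ultimately show ?thesis unfolding NN_def by (simp add: card_image)
qed

lemma degree:
  fixes x :: "'a::{field,finite}^2^2"
  shows "int (card {z. unit_graph_adj x z}) = int CARD('a)^4 - (int CARD('a)^3 + int CARD('a)^2 - int CARD('a))"
proof -
  have "{z. unit_graph_adj x z} = (\<lambda>U. U + x) ` (UNIV - {U. det U = 0})"
    by (auto simp: unit_graph_adj_def invertible_det_nz image_iff intro!: bexI[where x="_ - x"])
  moreover have "inj_on (\<lambda>U. U + x) S" for S by (auto simp: inj_on_def)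
  ultimately have "card {z. unit_graph_adj x z} = card (UNIV - {U::'a^2^2. det U = 0})" by (simp add: card_image)
  also have "\<dots> = CARD('a^2^2) - card {U::'a^2^2. det U = 0}" by (simp add: card_Diff_subset)
  moreover have "card {U::'a^2^2. det U = 0} \<le> CARD('a^2^2)" by (rule card_mono) auto
  ultimately have "int (card {z. unit_graph_adj x z}) = int (CARD('a^2^2)) - int (card {U::'a^2^2. det U = 0})"
    by (simp only: of_nat_diff)
  then show ?thesis using count_sing[where ?'a='a] by simp
qed

theorem theorem3p5:
  fixes q :: int
  assumes "q = int CARD('a::{field,finite})"
  shows "strongly_regular (UNIV :: ('a ^2^2) set) unit_graph_adj
           (q^4) (q^4 - q^3 - q^2 + q) (q^4 - 2*q^3 - q^2 + 3*q) (q^4 - 2*q^3 + q)"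
proof -
  let ?E = "mk 1 0 0 0 :: 'a^2^2"
  have NI: "int (NN (mat 1 :: 'a^2^2)) = q^4 - 2*q^3 - q^2 + 3*q"
    using NN_formula[of "mat 1 :: 'a^2^2"] count_I[where ?'a='a] assms by (simp add: algebra_simps)
  have NE: "int (NN ?E) = q^4 - 2*q^3 + q"
    using NN_formula[of ?E] count_E[where ?'a='a] assms by (simp add: algebra_simps)
  have adj: "unit_graph_adj x y \<longleftrightarrow> det (y - x) \<noteq> 0" for x y :: "'a^2^2"
    by (simp add: unit_graph_adj_def invertible_det_nz)
  show ?thesis unfolding strongly_regular_def
  proof (intro conjI ballI impI)
    show "finite (UNIV :: ('a ^2^2) set)" by simp
    show "\<not> unit_graph_adj x x" for x :: "'a^2^2" by (simp add: adj zero_mk det_mk)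
    show "unit_graph_adj x y = unit_graph_adj y x" for x y :: "'a^2^2" by (simp add: adj det_swap2)
    show "\<exists>x\<in>UNIV. \<exists>y\<in>UNIV. unit_graph_adj x (y::'a^2^2)"
      by (rule bexI[where x=0], rule bexI[where x="mat 1"]) (auto simp: adj)
    show "\<exists>x\<in>UNIV. \<exists>y\<in>UNIV. x \<noteq> y \<and> \<not> unit_graph_adj x (y::'a^2^2)"
      by (rule bexI[where x=0], rule bexI[where x="?E"]) (auto simp: adj det_mk zero_mk mk_eq_iff mk_diff)
    show "int (card (UNIV :: ('a ^2^2) set)) = q^4" using assms by (simp add: power_mult[symmetric])
    show "int (card {z\<in>UNIV. unit_graph_adj x z}) = q^4 - q^3 - q^2 + q" for x :: "'a^2^2"
      using degree[of x] assms by simp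
    show "int (card {z\<in>UNIV. unit_graph_adj x z \<and> unit_graph_adj y z}) = q^4 - 2*q^3 - q^2 + 3*q"
      if "x \<noteq> y \<and> unit_graph_adj x y" for x y :: "'a^2^2"
    proof -
      have "det (y - x) \<noteq> 0" using that by (simp add: adj)
      then show ?thesis using common_nb[of x y] NN_inv[of "y - x"] NI by simp
    qed
    show "int (card {z\<in>UNIV. unit_graph_adj x z \<and> unit_graph_adj y z}) = q^4 - 2*q^3 + q"
      if "x \<noteq> y \<and> \<not> unit_graph_adj x y" for x y :: "'a^2^2"
    proof -
      have "det (y - x) = 0" "y - x \<noteq> 0" using that by (auto simp: adj)
      then show ?thesis using common_nb[of x y] NN_rank1[of "y - x"] NE by simp
    qed
  qed
qed

end
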